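(* Let $L$ be an atomic orthomodular lattice and let $V\in\mathcal{B}(L)$ be a $2$-dimensional Boolean subalgebra, with generating family $\mathcal{F}_V=\{P,P^{\perp}\}$. Then: (i) if $V$ is maximal in $\mathcal{B}(L)$, then $P$ and $P^{\perp}$ are (complementary) atoms of $L$; (ii) if $V$ is included in a $3$-dimensional $W\in\mathcal{B}(L)$ that is maximal in $\mathcal{B}(L)$, then one of $P,P^{\perp}$ is an atom of $L$ and the other is the join of two atoms of $L$; moreover, $W$ contains precisely two $2$-dimensional elements of $\mathcal{B}(L)$ other than $V$; (iii) if $V$ is neither maximal in $\mathcal{B}(L)$ nor included in a $3$-dimensional element of $\mathcal{B}(L)$ that is maximal in $\mathcal{B}(L)$, then one of $P,P^{\perp}$ is an atom of $L$ if and only if every $4$-dimensional $W\in\mathcal{B}(L)$ with $V\subseteq W$ contains precisely three $3$-dimensional elements $V_1,V_2,V_3\in\mathcal{B}(L)$ with $V\subset V_i$ for $i=1,2,3$.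
   Context: $L$ is a lattice with least element $0$, greatest element $1$ and an orthocomplementation $P\mapsto P^{\perp}$, which is orthomodular and atomic (every nonzero element lies above an atom, i.e. a minimal nonzero element). Elements $P,Q$ are orthogonal if $P\le Q^{\perp}$. A Boolean subalgebra (BSA) $V$ of $L$ is said to be generated by a family $\mathcal{F}$ of nonzero pairwise orthogonal elements of $L$ with join $1$ if the elements of $\mathcal{F}$ are the atoms of $V$ and every element of $V$ is a join of elements of $\mathcal{F}$; this family is denoted $\mathcal{F}_V$. $\mathcal{B}(L)$ denotes the set of those BSAs of $L$ that are generated by some such family, partially ordered by inclusion (only such BSAs are considered). The dimension of $V\in\mathcal{B}(L)$ is the cardinality of $\mathcal{F}_V$. "Maximal" means maximal in the poset $\mathcal{B}(L)$. *)

theory Defs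
  imports Main
begin

text \<open>The lattice L is modelled as a type of class bounded_lattice (least element bot = 0,
greatest element top = 1); the orthocomplementation is an explicit parameter oc.\<close>

definition orthocomplementation :: "('a::bounded_lattice \<Rightarrow> 'a) \<Rightarrow> bool" where
  "orthocomplementation oc \<longleftrightarrow>
     (\<forall>x. oc (oc x) = x) \<and>
     (\<forall>x y. x \<le> y \<longrightarrow> oc y \<le> oc x) \<and>
     (\<forall>x. inf x (oc x) = bot) \<and>
     (\<forall>x. sup x (oc x) = top)"

definition orthomodular :: "('a::bounded_lattice \<Rightarrow> 'a) \<Rightarrow> bool" where
  "orthomodular oc \<longleftrightarrow> orthocomplementation oc \<and>
     (\<forall>x y. x \<le> y \<longrightarrow> y = sup x (inf y (oc x)))"

definition atom :: "'a::bounded_lattice \<Rightarrow> bool" where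
  "atom a \<longleftrightarrow> a \<noteq> bot \<and> (\<forall>b. b \<le> a \<longrightarrow> b = bot \<or> b = a)"

definition atomic :: "'a::bounded_lattice itself \<Rightarrow> bool" where
  "atomic _ \<longleftrightarrow> (\<forall>x::'a. x \<noteq> bot \<longrightarrow> (\<exists>a. atom a \<and> a \<le> x))"

definition orthogonal :: "('a::bounded_lattice \<Rightarrow> 'a) \<Rightarrow> 'a \<Rightarrow> 'a \<Rightarrow> bool" where
  "orthogonal oc x y \<longleftrightarrow> x \<le> oc y"

definition is_join :: "'a::order set \<Rightarrow> 'a \<Rightarrow> bool" where
  "is_join S x \<longleftrightarrow> (\<forall>s\<in>S. s \<le> x) \<and> (\<forall>y. (\<forall>s\<in>S. s \<le> y) \<longrightarrow> x \<le> y)"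

definition boolean_subalgebra :: "('a::bounded_lattice \<Rightarrow> 'a) \<Rightarrow> 'a set \<Rightarrow> bool" where
  "boolean_subalgebra oc V \<longleftrightarrow>
     bot \<in> V \<and> top \<in> V \<and>
     (\<forall>x\<in>V. \<forall>y\<in>V. inf x y \<in> V \<and> sup x y \<in> V) \<and>
     (\<forall>x\<in>V. oc x \<in> V) \<and>
     (\<forall>x\<in>V. \<forall>y\<in>V. \<forall>z\<in>V. inf x (sup y z) = sup (inf x y) (inf x z))"

definition atoms_of :: "'a::bounded_lattice set \<Rightarrow> 'a set" where
  "atoms_of V = {a\<in>V. a \<noteq> bot \<and> (\<forall>b\<in>V. b \<le> a \<longrightarrow> b = bot \<or> b = a)}"

definition generated_by :: "('a::bounded_lattice \<Rightarrow> 'a) \<Rightarrow> 'a set \<Rightarrow> 'a set \<Rightarrow> bool" where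
  "generated_by oc F V \<longleftrightarrow>
     boolean_subalgebra oc V \<and>
     (\<forall>x\<in>F. x \<noteq> bot) \<and>
     (\<forall>x\<in>F. \<forall>y\<in>F. x \<noteq> y \<longrightarrow> orthogonal oc x y) \<and>
     is_join F top \<and>
     atoms_of V = F \<and>
     (\<forall>v\<in>V. \<exists>G\<subseteq>F. is_join G v)"

definition inB :: "('a::bounded_lattice \<Rightarrow> 'a) \<Rightarrow> 'a set \<Rightarrow> bool" where
  "inB oc V \<longleftrightarrow> (\<exists>F. generated_by oc F V)"

definition gen_family :: "'a::bounded_lattice set \<Rightarrow> 'a set" where
  "gen_family V = atoms_of V"

definition dim :: "'a::bounded_lattice set \<Rightarrow> nat" where
  "dim V = card (gen_family V)"

definition maximalB :: "('a::bounded_lattice \<Rightarrow> 'a) \<Rightarrow> 'a set \<Rightarrow> bool" where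
  "maximalB oc V \<longleftrightarrow> inB oc V \<and> \<not> (\<exists>W. inB oc W \<and> V \<subset> W)"

end

theory Submission
  imports Defs
begin


lemma is_join_unique: "is_join G x \<Longrightarrow> is_join G y \<Longrightarrow> x = y"
  unfolding is_join_def by (meson order.antisym)

lemma is_join_empty: "is_join {} (bot::'a::bounded_lattice)"
  unfolding is_join_def by auto

lemma is_join_insert: "is_join G (x::'a::bounded_lattice) \<Longrightarrow> is_join (insert a G) (sup a x)"
  unfolding is_join_def by (auto intro: le_supI2)

definition J :: "'a::bounded_lattice set \<Rightarrow> 'a" where
  "J G = (THE x. is_join G x)"

lemma is_join_J: "finite G \<Longrightarrow> is_join G (J G)"
proof (induction G rule: finite_induct)
  case empty
  then show ?case unfolding J_def using is_join_empty
    by (metis is_join_unique theI)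
next
  case (insert a F)
  have "is_join (insert a F) (sup a (J F))" using insert.IH by (rule is_join_insert)
  then show ?case unfolding J_def by (metis is_join_unique theI)
qed

lemma J_eq: "finite G \<Longrightarrow> is_join G x \<Longrightarrow> J G = x"
  using is_join_J is_join_unique by blast

lemma J_empty[simp]: "J {} = bot"
  using J_eq is_join_empty by blast

lemma J_insert: "finite G \<Longrightarrow> J (insert a G) = sup a (J G)"
  by (simp add: J_eq is_join_J is_join_insert)

lemma J_single[simp]: "J {a} = a"
  by (simp add: J_insert)

lemma J_two[simp]: "J {a, b} = sup a b"
  by (simp add: J_insert)

lemma J_le_iff: "finite G \<Longrightarrow> J G \<le> y \<longleftrightarrow> (\<forall>g\<in>G. g \<le> y)"
  using is_join_J[of G] unfolding is_join_def by (meson order_trans)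

lemma J_ge: "finite G \<Longrightarrow> g \<in> G \<Longrightarrow> g \<le> J G"
  using is_join_J[of G] unfolding is_join_def by blast

lemma J_mono: "finite H \<Longrightarrow> G \<subseteq> H \<Longrightarrow> J G \<le> J H"
  by (metis J_ge J_le_iff finite_subset subsetD)

lemma J_union:
  assumes "finite G" "finite H" shows "J (G \<union> H) = sup (J G) (J H)"
proof (rule order.antisym)
  have "\<forall>g\<in>G \<union> H. g \<le> sup (J G) (J H)"
  proof
    fix g assume "g \<in> G \<union> H"
    then show "g \<le> sup (J G) (J H)"
    proof
      assume "g \<in> G" then have "g \<le> J G" using assms J_ge by blast
      then show ?thesis by (rule le_supI1)
    next
      assume "g \<in> H" then have "g \<le> J H" using assms J_ge by blast
      then show ?thesis by (rule le_supI2)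
    qed
  qed
  then show "J (G \<union> H) \<le> sup (J G) (J H)" using assms by (simp add: J_le_iff)
  show "sup (J G) (J H) \<le> J (G \<union> H)" using assms by (simp add: J_mono)
qed

lemma J_Union:
  assumes "finite \<X>" "\<forall>X\<in>\<X>. finite X" shows "J (J ` \<X>) = J (\<Union>\<X>)"
proof (rule order.antisym)
  have fU: "finite (\<Union>\<X>)" using assms by blast
  have "\<forall>y\<in>J ` \<X>. y \<le> J (\<Union>\<X>)"
  proof
    fix y assume "y \<in> J ` \<X>"
    then obtain X where X: "X \<in> \<X>" "y = J X" by blast
    then show "y \<le> J (\<Union>\<X>)" using fU J_mono[of "\<Union>\<X>" X] by blast
  qed
  then show "J (J ` \<X>) \<le> J (\<Union>\<X>)" using assms by (simp add: J_le_iff)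
  have "\<forall>e\<in>\<Union>\<X>. e \<le> J (J ` \<X>)"
  proof
    fix e assume "e \<in> \<Union>\<X>"
    then obtain X where X: "X \<in> \<X>" "e \<in> X" by blast
    then have "e \<le> J X" using assms J_ge by blast
    also have "J X \<le> J (J ` \<X>)" using X assms J_ge by blast
    finally show "e \<le> J (J ` \<X>)" .
  qed
  then show "J (\<Union>\<X>) \<le> J (J ` \<X>)" using fU by (simp add: J_le_iff)
qed

lemma J_closed:
  assumes "bot \<in> S" "\<forall>x\<in>S. \<forall>y\<in>S. sup x y \<in> S" "finite G" "G \<subseteq> S"
  shows "J G \<in> S"
  using assms(3,4)
proof (induction G rule: finite_induct)
  case empty then show ?case using assms(1) by simp
next
  case (insert a F) then show ?case using assms(2) by (simp add: J_insert)
qed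

definition Sp :: "'a::bounded_lattice set \<Rightarrow> 'a set" where
  "Sp F = J ` Pow F"

definition opu :: "('a::bounded_lattice \<Rightarrow> 'a) \<Rightarrow> 'a set \<Rightarrow> bool" where
  "opu oc F \<longleftrightarrow> finite F \<and> bot \<notin> F \<and> (\<forall>x\<in>F. \<forall>y\<in>F. x \<noteq> y \<longrightarrow> x \<le> oc y) \<and> J F = top"

locale OML =
  fixes oc :: "'a::bounded_lattice \<Rightarrow> 'a"
  assumes om: "orthomodular oc"
begin

lemma occ[simp]: "oc (oc x) = x"
  using om unfolding orthomodular_def orthocomplementation_def by blast
lemma oc_anti: "x \<le> y \<Longrightarrow> oc y \<le> oc x"
  using om unfolding orthomodular_def orthocomplementation_def by blast
lemma oc_le_iff[simp]: "oc x \<le> oc y \<longleftrightarrow> y \<le> x"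
  by (metis occ oc_anti)
lemma inf_oc[simp]: "inf x (oc x) = bot"
  using om unfolding orthomodular_def orthocomplementation_def by blast
lemma sup_oc[simp]: "sup x (oc x) = top"
  using om unfolding orthomodular_def orthocomplementation_def by blast
lemma omod: "x \<le> y \<Longrightarrow> y = sup x (inf y (oc x))"
  using om unfolding orthomodular_def by blast
lemma oc_inj: "oc x = oc y \<longleftrightarrow> x = y"
  by (metis occ)
lemma oc_sup[simp]: "oc (sup x y) = inf (oc x) (oc y)"
proof (rule order.antisym)
  show "oc (sup x y) \<le> inf (oc x) (oc y)" by (simp add: oc_anti)
  have "sup x y \<le> oc (inf (oc x) (oc y))"
    by (metis inf_le1 inf_le2 le_sup_iff occ oc_anti)
  then show "inf (oc x) (oc y) \<le> oc (sup x y)"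
    by (metis occ oc_anti)
qed
lemma oc_inf[simp]: "oc (inf x y) = sup (oc x) (oc y)"
  by (metis occ oc_sup)
lemma oc_bot[simp]: "oc bot = top"
  by (metis sup_bot_left sup_oc)
lemma oc_top[simp]: "oc top = bot"
  by (metis occ oc_bot)
lemma orth_sym: "x \<le> oc y \<longleftrightarrow> y \<le> oc x"
  by (metis occ oc_le_iff)
lemma zero_lemma: "z \<le> x \<Longrightarrow> z \<le> oc x \<Longrightarrow> z = bot"
  by (metis inf_oc le_bot le_inf_iff)

end


context OML begin

lemma opuD: assumes "opu oc F"
  shows "finite F" "bot \<notin> F" "\<And>x y. x \<in> F \<Longrightarrow> y \<in> F \<Longrightarrow> x \<noteq> y \<Longrightarrow> x \<le> oc y" "J F = top"
  using assms unfolding opu_def by auto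

lemma L1:
  assumes F: "opu oc F" and G: "G \<subseteq> F"
  shows "oc (J G) = J (F - G)"
proof -
  have fF: "finite F" using opuD[OF F] by simp
  then have fG: "finite G" and fFG: "finite (F - G)" using G finite_subset by auto
  have "\<forall>f\<in>F - G. f \<le> oc (J G)"
  proof
    fix f assume f: "f \<in> F - G"
    have "\<forall>g\<in>G. g \<le> oc f" using f G opuD(3)[OF F] by blast
    then have "J G \<le> oc f" using fG by (simp add: J_le_iff)
    then show "f \<le> oc (J G)" using orth_sym by blast
  qed
  then have le: "J (F - G) \<le> oc (J G)" using fFG by (simp add: J_le_iff)
  have eq: "G \<union> (F - G) = F" using G by blast
  have "sup (J G) (J (F - G)) = top" using J_union[OF fG fFG] eq opuD(4)[OF F] by simp
  then have z: "inf (oc (J G)) (oc (J (F - G))) = bot" by (metis oc_sup oc_top)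
  show ?thesis using omod[OF le] z by (metis sup_bot_right)
qed

lemma L2:
  assumes F: "opu oc F" and G: "G \<subseteq> F" and H: "H \<subseteq> F" and le: "J G \<le> J H"
  shows "G \<subseteq> H"
proof
  fix a assume a: "a \<in> G"
  show "a \<in> H"
  proof (rule ccontr)
    assume "a \<notin> H"
    then have aFH: "a \<in> F - H" using a G by blast
    have fF: "finite F" using opuD[OF F] by simp
    have "a \<le> J G" using J_ge[OF finite_subset[OF G fF] a] .
    then have 1: "a \<le> J H" using le by simp
    have "a \<le> J (F - H)" using aFH J_ge fF by blast
    then have 2: "a \<le> oc (J H)" using L1[OF F H] by simp
    have "a = bot" using zero_lemma[OF 1 2] .
    then show False using opuD(2)[OF F] a G by blast
  qed
qed

lemma J_inj:
  assumes "opu oc F" "G \<subseteq> F" "H \<subseteq> F" "J G = J H"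
  shows "G = H"
  using L2[OF assms(1,2,3)] L2[OF assms(1,3,2)] assms(4) by auto

lemma J_le_iff2:
  assumes "opu oc F" "G \<subseteq> F" "H \<subseteq> F"
  shows "J G \<le> J H \<longleftrightarrow> G \<subseteq> H"
proof
  assume "J G \<le> J H" then show "G \<subseteq> H" using L2[OF assms] by blast
next
  assume "G \<subseteq> H"
  moreover have "finite H" using finite_subset[OF assms(3) opuD(1)[OF assms(1)]] .
  ultimately show "J G \<le> J H" by (simp add: J_mono)
qed

lemma L3:
  assumes F: "opu oc F" and G: "G \<subseteq> F" and H: "H \<subseteq> F"
  shows "inf (J G) (J H) = J (G \<inter> H)"
proof -
  have fF: "finite F" using opuD[OF F] by simp
  have "oc (inf (J G) (J H)) = sup (J (F - G)) (J (F - H))" using L1[OF F G] L1[OF F H] by simp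
  also have "\<dots> = J ((F - G) \<union> (F - H))" using fF by (simp add: J_union)
  also have "(F - G) \<union> (F - H) = F - (G \<inter> H)" by blast
  also have "J (F - (G \<inter> H)) = oc (J (G \<inter> H))"
  proof -
    have "G \<inter> H \<subseteq> F" using G by blast
    from L1[OF F this] show ?thesis by (rule sym)
  qed
  finally have "oc (inf (J G) (J H)) = oc (J (G \<inter> H))" .
  then show ?thesis by (simp only: oc_inj)
qed

lemma Sp_mem_iff: "x \<in> Sp F \<longleftrightarrow> (\<exists>G. G \<subseteq> F \<and> x = J G)"
  unfolding Sp_def by blast

lemma Sp_memE:
  assumes "x \<in> Sp F" obtains G where "G \<subseteq> F" "x = J G"
  using assms unfolding Sp_def by blast

lemma Sp_memI: "G \<subseteq> F \<Longrightarrow> J G \<in> Sp F"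
  unfolding Sp_def by blast

lemma Sp_sub: "F \<subseteq> Sp F"
proof
  fix a assume "a \<in> F" then have "J {a} \<in> Sp F" by (intro Sp_memI) auto
  then show "a \<in> Sp F" by simp
qed

lemma Sp_bot: "bot \<in> Sp F"
  using Sp_memI[of "{}" F] by simp

lemma Sp_top: "opu oc F \<Longrightarrow> top \<in> Sp F"
  using Sp_memI[of F F] opuD(4) by auto

lemma Sp_sup: assumes "opu oc F" "x \<in> Sp F" "y \<in> Sp F" shows "sup x y \<in> Sp F"
proof -
  obtain G H where "G \<subseteq> F" "H \<subseteq> F" "x = J G" "y = J H" using assms(2,3) unfolding Sp_mem_iff by blast
  moreover have "finite G" "finite H" using calculation(1,2) finite_subset opuD(1)[OF assms(1)] by (auto intro: finite_subset)
  ultimately show ?thesis using Sp_memI[of "G \<union> H" F] by (simp add: J_union)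
qed

lemma Sp_inf: assumes "opu oc F" "x \<in> Sp F" "y \<in> Sp F" shows "inf x y \<in> Sp F"
proof -
  obtain G H where "G \<subseteq> F" "H \<subseteq> F" "x = J G" "y = J H" using assms(2,3) unfolding Sp_mem_iff by blast
  then show ?thesis using Sp_memI[of "G \<inter> H" F] L3[OF assms(1)] by auto
qed

lemma Sp_oc: assumes "opu oc F" "x \<in> Sp F" shows "oc x \<in> Sp F"
proof -
  obtain G where "G \<subseteq> F" "x = J G" using assms(2) unfolding Sp_mem_iff by blast
  then show ?thesis using Sp_memI[of "F - G" F] L1[OF assms(1)] by auto
qed

lemma Sp_J: assumes "opu oc F" "finite G" "G \<subseteq> Sp F" shows "J G \<in> Sp F"
  using J_closed[of "Sp F" G] Sp_bot Sp_sup[OF assms(1)] assms by blast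

lemma Sp_subset: assumes "opu oc E" "finite F" "F \<subseteq> Sp E" shows "Sp F \<subseteq> Sp E"
proof
  fix x assume "x \<in> Sp F"
  then obtain G where "G \<subseteq> F" "x = J G" unfolding Sp_mem_iff by blast
  moreover have "finite G" using finite_subset[OF calculation(1) assms(2)] .
  ultimately show "x \<in> Sp E" using Sp_J[OF assms(1), of G] assms(3) by blast
qed

lemma construct:
  assumes F: "opu oc F"
  shows "generated_by oc F (Sp F)"
proof -
  have fF: "finite F" using opuD[OF F] by simp
  have BSA: "boolean_subalgebra oc (Sp F)"
    unfolding boolean_subalgebra_def
  proof (intro conjI ballI)
    show "bot \<in> Sp F" by (rule Sp_bot)
    show "top \<in> Sp F" using F by (rule Sp_top)
    fix x y assume "x \<in> Sp F" "y \<in> Sp F"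
    then show "inf x y \<in> Sp F" "sup x y \<in> Sp F" using Sp_inf Sp_sup F by auto
  next
    fix x assume "x \<in> Sp F" then show "oc x \<in> Sp F" using Sp_oc F by auto
  next
    fix x y z assume "x \<in> Sp F" "y \<in> Sp F" "z \<in> Sp F"
    then obtain G H K where GHK: "G \<subseteq> F" "H \<subseteq> F" "K \<subseteq> F" "x = J G" "y = J H" "z = J K"
      unfolding Sp_mem_iff by blast
    then have fin: "finite G" "finite H" "finite K" using finite_subset[OF _ fF] by auto
    have "inf x (sup y z) = J (G \<inter> (H \<union> K))"
      using GHK fin by (simp add: J_union[symmetric] L3[OF F])
    also have "G \<inter> (H \<union> K) = (G \<inter> H) \<union> (G \<inter> K)" by blast
    also have "J \<dots> = sup (inf x y) (inf x z)"
      using GHK fin by (simp add: J_union L3[OF F])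
    finally show "inf x (sup y z) = sup (inf x y) (inf x z)" .
  qed
  have atoms: "atoms_of (Sp F) = F"
  proof
    show "atoms_of (Sp F) \<subseteq> F"
    proof
      fix x assume "x \<in> atoms_of (Sp F)"
      then have x: "x \<in> Sp F" "x \<noteq> bot" "\<forall>b\<in>Sp F. b \<le> x \<longrightarrow> b = bot \<or> b = x"
        unfolding atoms_of_def by auto
      obtain G where G: "G \<subseteq> F" "x = J G" using x(1) unfolding Sp_mem_iff by blast
      then obtain g where g: "g \<in> G" using x(2) by fastforce
      have "g \<le> x" using G(2) J_ge[OF finite_subset[OF G(1) fF] g] by simp
      moreover have "g \<in> Sp F" using g G Sp_sub by blast
      moreover have "g \<noteq> bot" using g G opuD(2)[OF F] by blast
      ultimately have "g = x" using x(3) by blast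
      then show "x \<in> F" using g G by blast
    qed
    show "F \<subseteq> atoms_of (Sp F)"
    proof
      fix a assume a: "a \<in> F"
      have "\<forall>b\<in>Sp F. b \<le> a \<longrightarrow> b = bot \<or> b = a"
      proof (intro ballI impI)
        fix b assume "b \<in> Sp F" "b \<le> a"
        then obtain H where H: "H \<subseteq> F" "b = J H" "J H \<le> J {a}" unfolding Sp_mem_iff by auto
        then have "H \<subseteq> {a}" using L2[OF F] a by blast
        then have "H = {} \<or> H = {a}" by blast
        then show "b = bot \<or> b = a" using H by auto
      qed
      then show "a \<in> atoms_of (Sp F)" unfolding atoms_of_def using a Sp_sub opuD(2)[OF F] by blast
    qed
  qed
  show ?thesis unfolding generated_by_def
  proof (intro conjI)
    show "boolean_subalgebra oc (Sp F)" by (rule BSA)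
    show "\<forall>x\<in>F. x \<noteq> bot" using opuD(2)[OF F] by blast
    show "\<forall>x\<in>F. \<forall>y\<in>F. x \<noteq> y \<longrightarrow> orthogonal oc x y"
      unfolding orthogonal_def using opuD(3)[OF F] by blast
    show "is_join F top" using is_join_J[OF fF] opuD(4)[OF F] by simp
    show "atoms_of (Sp F) = F" by (rule atoms)
    show "\<forall>v\<in>Sp F. \<exists>G\<subseteq>F. is_join G v"
    proof
      fix v assume "v \<in> Sp F"
      then obtain G where G: "G \<subseteq> F" "v = J G" unfolding Sp_mem_iff by blast
      then have "is_join G v" using is_join_J[OF finite_subset[OF G(1) fF]] by simp
      then show "\<exists>G\<subseteq>F. is_join G v" using G by blast
    qed
  qed
qed

lemma Sp_inB: "opu oc F \<Longrightarrow> inB oc (Sp F)"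
  unfolding inB_def using construct by blast

lemma gen_Sp: "opu oc F \<Longrightarrow> gen_family (Sp F) = F"
  using construct unfolding generated_by_def gen_family_def by blast

lemma dim_Sp: "opu oc F \<Longrightarrow> dim (Sp F) = card F"
  unfolding dim_def by (simp add: gen_Sp)

lemma inB_struct:
  assumes "inB oc U" "finite (gen_family U)"
  shows "opu oc (gen_family U) \<and> U = Sp (gen_family U)"
proof -
  obtain F where gb: "generated_by oc F U" using assms(1) unfolding inB_def by blast
  then have FU: "gen_family U = F" unfolding generated_by_def gen_family_def by blast
  have fF: "finite F" using assms(2) FU by simp
  have gb': "\<forall>x\<in>F. x \<noteq> bot" "\<forall>x\<in>F. \<forall>y\<in>F. x \<noteq> y \<longrightarrow> x \<le> oc y" "is_join F top"
    using gb unfolding generated_by_def orthogonal_def by blast+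
  have opu: "opu oc F" unfolding opu_def using gb' fF J_eq[OF fF gb'(3)] by blast
  have BSA: "boolean_subalgebra oc U" and at: "atoms_of U = F"
    and rep: "\<forall>v\<in>U. \<exists>G\<subseteq>F. is_join G v"
    using gb unfolding generated_by_def by blast+
  have "U = Sp F"
  proof
    show "U \<subseteq> Sp F"
    proof
      fix v assume "v \<in> U"
      then obtain G where G: "G \<subseteq> F" "is_join G v" using rep by blast
      then have "v = J G" using J_eq[OF finite_subset[OF G(1) fF]] by simp
      then show "v \<in> Sp F" using G Sp_memI by blast
    qed
    show "Sp F \<subseteq> U"
    proof
      fix v assume "v \<in> Sp F"
      then obtain G where G: "G \<subseteq> F" "v = J G" unfolding Sp_mem_iff by blast
      have "F \<subseteq> U" using at unfolding atoms_of_def by blast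
      moreover have "bot \<in> U" "\<forall>x\<in>U. \<forall>y\<in>U. sup x y \<in> U" using BSA unfolding boolean_subalgebra_def by blast+
      ultimately show "v \<in> U" using G J_closed[of U G, OF _ _ finite_subset[OF G(1) fF]] by blast
    qed
  qed
  then show ?thesis using FU opu by simp
qed

lemma Sp_inj: "opu oc F \<Longrightarrow> opu oc G \<Longrightarrow> Sp F = Sp G \<Longrightarrow> F = G"
  by (metis gen_Sp)

end


context OML begin

lemma opu_fin: "opu oc F \<Longrightarrow> G \<subseteq> F \<Longrightarrow> finite G"
  using opuD(1) finite_subset by blast

lemma opu_orth: "opu oc F \<Longrightarrow> x \<in> F \<Longrightarrow> y \<in> F \<Longrightarrow> y \<le> x \<Longrightarrow> x = y"
  using opuD(2,3)[of F] zero_lemma by metis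

lemma split:
  assumes F: "opu oc F" and a: "a \<in> F" and na: "\<not> atom a"
  obtains a1 a2 where "opu oc (insert a1 (insert a2 (F - {a})))"
    "card (insert a1 (insert a2 (F - {a}))) = Suc (card F)"
    "Sp F \<subset> Sp (insert a1 (insert a2 (F - {a})))"
    "a = sup a1 a2" "a1 \<noteq> a2" "a1 \<notin> F" "a2 \<notin> F"
proof -
  have fF: "finite F" using opuD(1)[OF F] .
  have anb: "a \<noteq> bot" using a opuD(2)[OF F] by blast
  obtain b where b: "b \<le> a" "b \<noteq> bot" "b \<noteq> a" using na anb unfolding atom_def by blast
  define a2 where "a2 = inf a (oc b)"
  have aeq: "a = sup b a2" unfolding a2_def using omod[OF b(1)] .
  have a2le: "a2 \<le> a" "a2 \<le> oc b" unfolding a2_def by auto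
  have a2nb: "a2 \<noteq> bot" using aeq b(3) by auto
  have ba2: "b \<le> oc a2" using a2le(2) orth_sym by blast
  have ne: "b \<noteq> a2"
  proof
    assume "b = a2" then have "b \<le> oc b" using a2le(2) by simp
    then show False using zero_lemma[of b b] b(2) by simp
  qed
  have oth: "\<And>x. x \<in> F - {a} \<Longrightarrow> x \<le> oc a" using opuD(3)[OF F] a by blast
  have bF: "b \<notin> F" using oth b zero_lemma by blast
  have a2F: "a2 \<notin> F"
  proof
    assume a2in: "a2 \<in> F"
    have "a2 \<noteq> a"
    proof
      assume "a2 = a"
      then have "b \<le> a2" using b(1) by simp
      then have "b \<le> oc b" using a2le(2) by (rule order.trans)
      then show False using zero_lemma[of b b] b(2) by simp
    qed
    then have "a2 \<le> oc a" using oth a2in by blast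
    then show False using a2le(1) zero_lemma a2nb by blast
  qed
  define F' where "F' = insert b (insert a2 (F - {a}))"
  have fF': "finite F'" unfolding F'_def using fF by simp
  have bot': "bot \<notin> F'" unfolding F'_def using b(2) a2nb opuD(2)[OF F] by blast
  have orth': "\<forall>x\<in>F'. \<forall>y\<in>F'. x \<noteq> y \<longrightarrow> x \<le> oc y"
  proof (intro ballI impI)
    fix x y assume x: "x \<in> F'" and y: "y \<in> F'" and xy: "x \<noteq> y"
    have sm: "\<And>u v. u \<in> F - {a} \<Longrightarrow> v \<le> a \<Longrightarrow> u \<le> oc v \<and> v \<le> oc u"
    proof -
      fix u v assume u: "u \<in> F - {a}" and v: "v \<le> a"
      have "u \<le> oc a" using oth u .
      then have "a \<le> oc u" using orth_sym by blast
      then have "v \<le> oc u" using v by simp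
      then show "u \<le> oc v \<and> v \<le> oc u" using orth_sym by blast
    qed
    show "x \<le> oc y"
      using x y xy sm[of x b] sm[of y b] sm[of x a2] sm[of y a2] b(1) a2le ba2
        opuD(3)[OF F] unfolding F'_def by auto
  qed
  have "J F' = sup b (sup a2 (J (F - {a})))" unfolding F'_def using fF by (simp add: J_insert)
  also have "\<dots> = sup a (J (F - {a}))" using aeq by (simp add: sup_assoc)
  also have "\<dots> = J F" using J_insert[of "F - {a}" a] fF a by (simp add: insert_absorb)
  finally have top': "J F' = top" using opuD(4)[OF F] by simp
  have opu': "opu oc F'" unfolding opu_def using fF' bot' orth' top' by blast
  have c1: "card (F - {a}) = card F - 1" using a fF by (simp add: card_Diff_singleton)
  have c0: "card F > 0" using a fF card_gt_0_iff by blast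
  have "b \<notin> insert a2 (F - {a})" using ne bF by blast
  then have "card F' = Suc (card (insert a2 (F - {a})))" unfolding F'_def using fF by simp
  also have "card (insert a2 (F - {a})) = Suc (card (F - {a}))" using a2F fF by simp
  finally have card': "card F' = Suc (card F)" using c1 c0 by simp
  have "F \<subseteq> Sp F'"
  proof
    fix x assume x: "x \<in> F"
    show "x \<in> Sp F'"
    proof (cases "x = a")
      case True
      have "J {b, a2} \<in> Sp F'" unfolding F'_def by (intro Sp_memI) auto
      then show ?thesis using True aeq by simp
    next
      case False
      then have "x \<in> F'" unfolding F'_def using x by blast
      then show ?thesis using Sp_sub by blast
    qed
  qed
  then have sub: "Sp F \<subseteq> Sp F'" using Sp_subset[OF opu' fF] by blast
  have "b \<in> Sp F'" using Sp_sub unfolding F'_def by blast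
  moreover have "b \<notin> Sp F"
  proof
    assume "b \<in> Sp F"
    then obtain G where G: "G \<subseteq> F" "b = J G" unfolding Sp_mem_iff by blast
    have "J G \<le> J {a}" using G b(1) by simp
    then have "G \<subseteq> {a}" using J_le_iff2[OF F G(1)] a by blast
    then have "G = {} \<or> G = {a}" by blast
    then show False using G b by auto
  qed
  ultimately have "Sp F \<subset> Sp F'" using sub by blast
  then show ?thesis using that[of b a2] opu' card' aeq ne bF a2F unfolding F'_def by blast
qed

lemma maximal_atom:
  assumes F: "opu oc F" and m: "maximalB oc (Sp F)" and a: "a \<in> F"
  shows "atom a"
proof (rule ccontr)
  assume "\<not> atom a"
  then obtain a1 a2 where "opu oc (insert a1 (insert a2 (F - {a})))"
    "Sp F \<subset> Sp (insert a1 (insert a2 (F - {a})))" using split[OF F a] by metis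
  then show False using m Sp_inB unfolding maximalB_def by blast
qed

lemma atom_in:
  assumes E: "opu oc E" and x: "x \<in> Sp E" and at: "atom x"
  shows "x \<in> E"
proof -
  obtain X where X: "X \<subseteq> E" "x = J X" using x unfolding Sp_mem_iff by blast
  have "X \<noteq> {}" using X at unfolding atom_def by auto
  then obtain e where e: "e \<in> X" by blast
  have "e \<le> x" using X J_ge[OF opu_fin[OF E X(1)] e] by simp
  moreover have "e \<noteq> bot" using e X opuD(2)[OF E] by blast
  ultimately have "e = x" using at unfolding atom_def by blast
  then show ?thesis using e X by blast
qed

lemma two_oc:
  assumes F: "opu oc {f, g}" and ne: "f \<noteq> g"
  shows "g = oc f"
proof -
  have "{f} \<subseteq> {f, g}" by blast
  from L1[OF F this] have "oc (J {f}) = J ({f, g} - {f})" .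
  also have "{f, g} - {f} = {g}" using ne by blast
  finally show ?thesis by simp
qed

definition S2 :: "'a \<Rightarrow> 'a set" where "S2 x = Sp {x, oc x}"

lemma S2_oc: "S2 (oc x) = S2 x"
  unfolding S2_def by (simp add: insert_commute)

lemma S2_opu:
  assumes "x \<noteq> bot" "x \<noteq> top"
  shows "opu oc {x, oc x}" "card {x, oc x} = 2"
proof -
  have "oc x \<noteq> bot" using assms(2) by (metis oc_bot occ)
  moreover have "x \<le> oc (oc x)" by simp
  ultimately show "opu oc {x, oc x}" unfolding opu_def using assms by auto
  have "x \<noteq> oc x" using assms(1) inf_oc by (metis inf.idem)
  then show "card {x, oc x} = 2" by simp
qed

lemma S2_sub:
  assumes E: "opu oc E" and x: "x \<in> Sp E" "x \<noteq> bot" "x \<noteq> top"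
  shows "S2 x \<subseteq> Sp E"
  unfolding S2_def using Sp_subset[OF E] x Sp_oc[OF E] by simp

lemma dim2_struct:
  assumes U: "inB oc U" "dim U = 2"
  obtains f where "U = S2 f" "f \<noteq> bot" "f \<noteq> top" "f \<in> U"
proof -
  have c: "card (gen_family U) = 2" using U unfolding dim_def by simp
  then have fin: "finite (gen_family U)" by (metis card.infinite zero_neq_numeral)
  have st: "opu oc (gen_family U)" "U = Sp (gen_family U)" using inB_struct[OF U(1) fin] by auto
  obtain f g where fg: "gen_family U = {f, g}" "f \<noteq> g" using c card_2_iff by metis
  have g: "g = oc f" using two_oc st fg by metis
  have "f \<noteq> bot" "g \<noteq> bot" using st(1) fg opuD(2) by auto
  then have "f \<noteq> top" using g by auto
  moreover have "U = S2 f" using st fg g unfolding S2_def by simp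
  moreover have "f \<in> U" using st fg Sp_sub by blast
  ultimately show ?thesis using that \<open>f \<noteq> bot\<close> by blast
qed

lemma elt_block:
  assumes E: "opu oc E" and c: "card E = 3" and x: "x \<in> Sp E" "x \<noteq> bot" "x \<noteq> top"
  obtains e where "e \<in> E" "S2 x = S2 e"
proof -
  have fE: "finite E" using opuD(1)[OF E] .
  obtain X where X: "X \<subseteq> E" "x = J X" using x unfolding Sp_mem_iff by blast
  have Xne: "X \<noteq> {}" using X x by auto
  have XnE: "X \<noteq> E" using X x opuD(4)[OF E] by auto
  have fX: "finite X" using opu_fin[OF E X(1)] .
  have "card X \<noteq> 0" using fX Xne by simp
  moreover have "X \<subset> E" using X XnE by blast
  then have "card X < 3" using psubset_card_mono[OF fE] c by metis
  ultimately have "card X = 1 \<or> card X = 2" by linarith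
  then show ?thesis
  proof
    assume "card X = 1"
    then obtain e where "X = {e}" by (auto simp: card_1_singleton_iff)
    then show ?thesis using that X by auto
  next
    assume "card X = 2"
    then have "card (E - X) = 1" using card_Diff_subset[OF fX X(1)] c by simp
    then obtain e where e: "E - X = {e}" by (auto simp: card_1_singleton_iff)
    have "oc x = e" using L1[OF E X(1)] X e by simp
    then have "S2 x = S2 e" using S2_oc by metis
    then show ?thesis using that e by blast
  qed
qed

end


context OML begin

lemma dim_struct:
  assumes U: "inB oc U" "dim U = n" "n > 0"
  shows "opu oc (gen_family U)" "U = Sp (gen_family U)" "card (gen_family U) = n"
proof -
  have c: "card (gen_family U) = n" using U unfolding dim_def by simp
  then have fin: "finite (gen_family U)" using U(3) card.infinite by force
  show "opu oc (gen_family U)" "U = Sp (gen_family U)" using inB_struct[OF U(1) fin] by auto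
  show "card (gen_family U) = n" by (rule c)
qed

lemma blocks:
  assumes E: "opu oc E" and XE: "\<X> \<subseteq> Pow E" and ne: "{} \<notin> \<X>"
    and dj: "\<forall>X\<in>\<X>. \<forall>Y\<in>\<X>. X \<noteq> Y \<longrightarrow> X \<inter> Y = {}" and un: "\<Union>\<X> = E"
  shows "opu oc (J ` \<X>)" "card (J ` \<X>) = card \<X>" "J ` \<X> \<subseteq> Sp E"
proof -
  have fE: "finite E" using opuD(1)[OF E] .
  have fX: "finite \<X>" using finite_subset[OF XE] fE by simp
  have inj: "inj_on J \<X>"
    unfolding inj_on_def using J_inj[OF E] XE by blast
  then show "card (J ` \<X>) = card \<X>" by (rule card_image)
  show "J ` \<X> \<subseteq> Sp E" using XE Sp_memI by blast
  have bot: "bot \<notin> J ` \<X>"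
  proof
    assume "bot \<in> J ` \<X>"
    then obtain X where X: "X \<in> \<X>" "J X = J {}" by auto
    then have "X = {}" using J_inj[OF E, of X "{}"] XE by blast
    then show False using X ne by blast
  qed
  have orth: "\<forall>x\<in>J ` \<X>. \<forall>y\<in>J ` \<X>. x \<noteq> y \<longrightarrow> x \<le> oc y"
  proof (intro ballI impI)
    fix x y assume "x \<in> J ` \<X>" "y \<in> J ` \<X>" "x \<noteq> y"
    then obtain X Y where XY: "X \<in> \<X>" "Y \<in> \<X>" "x = J X" "y = J Y" "X \<noteq> Y" by blast
    then have "X \<subseteq> E - Y" using dj XE by blast
    then have "J X \<le> J (E - Y)" using J_mono fE by blast
    also have "J (E - Y) = oc (J Y)" using L1[OF E, of Y] XY XE by auto
    finally show "x \<le> oc y" using XY by simp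
  qed
  have "J (J ` \<X>) = J E" using J_Union[OF fX] un XE fE finite_subset by (metis PowD subsetD)
  then have top: "J (J ` \<X>) = top" using opuD(4)[OF E] by simp
  show "opu oc (J ` \<X>)" unfolding opu_def using fX bot orth top by blast
qed

lemma Sp_S2_sub:
  assumes F: "opu oc F" and a: "a \<in> F"
  shows "S2 a \<subseteq> Sp F"
proof -
  have "a \<in> Sp F" using a Sp_sub by blast
  then have "{a, oc a} \<subseteq> Sp F" using Sp_oc[OF F] by blast
  then show ?thesis unfolding S2_def using Sp_subset[OF F, of "{a, oc a}"] by simp
qed

lemma iii_fwd:
  assumes E: "opu oc E" and c4: "card E = 4" and a: "a \<in> E"
  shows "card {U. inB oc U \<and> dim U = 3 \<and> S2 a \<subset> U \<and> U \<subseteq> Sp E} = 3"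
proof -
  have fE: "finite E" using opuD(1)[OF E] .
  define Fx where "Fx x = {a, x, J (E - {a, x})}" for x
  define R where "R x = Sp (Fx x)" for x
  have cEa: "card (E - {a}) = 3" using c4 a fE by (simp add: card_Diff_singleton)
  have cEax: "card (E - {a, x}) = 2" if x: "x \<in> E - {a}" for x
  proof -
    have "E - {a, x} = (E - {a}) - {x}" by blast
    then show ?thesis using cEa x fE by (simp add: card_Diff_singleton)
  qed
  have anb: "a \<noteq> bot" using a opuD(2)[OF E] by blast
  have ant: "a \<noteq> top"
  proof
    assume at: "a = top"
    obtain e where e: "e \<in> E - {a}" using cEa by (metis card.empty ex_in_conv zero_neq_numeral)
    then have "e \<le> oc a" using opuD(3)[OF E] a by blast
    then have "e = bot" using at by (simp add: bot_unique)
    then show False using e opuD(2)[OF E] by blast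
  qed
  have S2a: "opu oc {a, oc a}" "card {a, oc a} = 2" using S2_opu[OF anb ant] by auto
  have dS2a: "dim (S2 a) = 2" unfolding S2_def using dim_Sp[OF S2a(1)] S2a(2) by simp
  have Fx: "opu oc (Fx x) \<and> card (Fx x) = 3 \<and> Fx x \<subseteq> Sp E" if x: "x \<in> E - {a}" for x
  proof -
    define \<X> where "\<X> = {{a}, {x}, E - {a, x}}"
    have c2: "card (E - {a, x}) = 2" using cEax[OF x] .
    have n1: "E - {a, x} \<noteq> {a}" "E - {a, x} \<noteq> {x}" using c2 by auto
    have ax: "a \<noteq> x" using x by blast
    have "J ` \<X> = Fx x" unfolding \<X>_def Fx_def by simp
    moreover have "card \<X> = 3" unfolding \<X>_def using n1 ax by (simp add: doubleton_eq_iff)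
    moreover have "opu oc (J ` \<X>) \<and> card (J ` \<X>) = card \<X> \<and> J ` \<X> \<subseteq> Sp E"
    proof (intro conjI)
      have XE: "\<X> \<subseteq> Pow E" unfolding \<X>_def using a x by blast
      have "E - {a, x} \<noteq> {}" using c2 by (metis card.empty zero_neq_numeral)
      then have ne: "{} \<notin> \<X>" unfolding \<X>_def by auto
      have dj: "\<forall>X\<in>\<X>. \<forall>Y\<in>\<X>. X \<noteq> Y \<longrightarrow> X \<inter> Y = {}" unfolding \<X>_def using ax by auto
      have un: "\<Union>\<X> = E" unfolding \<X>_def using a x by blast
      show "opu oc (J ` \<X>)" "card (J ` \<X>) = card \<X>" "J ` \<X> \<subseteq> Sp E"
        using blocks[OF E XE ne dj un] by auto
    qed
    ultimately show ?thesis by simp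
  qed
  have memR: "R x \<in> {U. inB oc U \<and> dim U = 3 \<and> S2 a \<subset> U \<and> U \<subseteq> Sp E}" if x: "x \<in> E - {a}" for x
  proof -
    have o: "opu oc (Fx x)" and c: "card (Fx x) = 3" and s: "Fx x \<subseteq> Sp E" using Fx[OF x] by auto
    have "inB oc (R x)" unfolding R_def using Sp_inB[OF o] .
    moreover have d3: "dim (R x) = 3" unfolding R_def using dim_Sp[OF o] c by simp
    moreover have "S2 a \<subseteq> R x" unfolding R_def using Sp_S2_sub[OF o] Fx_def by simp
    moreover have "S2 a \<noteq> R x" using dS2a d3 by auto
    moreover have "R x \<subseteq> Sp E" unfolding R_def using Sp_subset[OF E _ s] opuD(1)[OF o] by blast
    ultimately show ?thesis by blast
  qed
  have inR: "U \<in> R ` (E - {a})" if U: "U \<in> {U. inB oc U \<and> dim U = 3 \<and> S2 a \<subset> U \<and> U \<subseteq> Sp E}" for U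
  proof -
    define F where "F = gen_family U"
    have UB: "inB oc U" "dim U = 3" "S2 a \<subset> U" "U \<subseteq> Sp E" using U by auto
    have F: "opu oc F" "U = Sp F" "card F = 3" using dim_struct[OF UB(1,2)] unfolding F_def by auto
    have fF: "finite F" using opuD(1)[OF F(1)] .
    have aU: "a \<in> Sp F" using UB(3) F(2) Sp_sub unfolding S2_def by blast
    have FE: "F \<subseteq> Sp E" using UB(4) F(2) Sp_sub by blast
    have aF: "a \<in> F"
    proof -
      obtain H where H: "H \<subseteq> F" "a = J H" using aU unfolding Sp_mem_iff by blast
      then obtain h where h: "h \<in> H" using anb by fastforce
      have hle: "h \<le> a" using H J_ge[OF finite_subset[OF H(1) fF] h] by simp
      have "h \<in> Sp E" using FE H(1) h by blast
      then obtain Y where Y: "Y \<subseteq> E" "h = J Y" unfolding Sp_mem_iff by blast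
      have "J Y \<le> J {a}" using hle Y by simp
      then have "Y \<subseteq> {a}" using J_le_iff2[OF E Y(1)] a by blast
      moreover have "Y \<noteq> {}" using Y h H(1) opuD(2)[OF F(1)] by auto
      ultimately have "Y = {a}" by blast
      then have "h = a" using Y by simp
      then show ?thesis using h H by blast
    qed
    have "card (F - {a}) = 2" using F(3) aF fF by (simp add: card_Diff_singleton)
    then obtain f g where fg: "F - {a} = {f, g}" "f \<noteq> g" using card_2_iff by metis
    have Feq: "F = {a, f, g}" using fg aF by blast
    have fa: "f \<noteq> a" "g \<noteq> a" using fg by auto
    have "f \<in> Sp E" "g \<in> Sp E" using FE Feq by auto
    then obtain X Y where X: "X \<subseteq> E" "f = J X" and Y: "Y \<subseteq> E" "g = J Y" unfolding Sp_mem_iff by blast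
    have ocA: "oc a = J (E - {a})" using L1[OF E, of "{a}"] a by simp
    have "f \<le> oc a" using opuD(3)[OF F(1)] Feq fa by auto
    then have Xa: "X \<subseteq> E - {a}" using ocA X J_le_iff2[OF E X(1), of "E - {a}"] by auto
    have "g \<le> oc a" using opuD(3)[OF F(1)] Feq fa by auto
    then have Ya: "Y \<subseteq> E - {a}" using ocA Y J_le_iff2[OF E Y(1), of "E - {a}"] by auto
    have "f \<le> oc g" using opuD(3)[OF F(1)] Feq fg by auto
    moreover have "oc g = J (E - Y)" using L1[OF E Y(1)] Y by simp
    ultimately have "X \<subseteq> E - Y" using X J_le_iff2[OF E X(1), of "E - Y"] by auto
    then have XY: "X \<inter> Y = {}" by blast
    have Xne: "X \<noteq> {}" using X opuD(2)[OF F(1)] Feq by auto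
    have Yne: "Y \<noteq> {}" using Y opuD(2)[OF F(1)] Feq by auto
    have fX: "finite X" "finite Y" using X(1) Y(1) fE finite_subset by auto
    have "J ({a} \<union> X \<union> Y) = sup a (sup f g)"
      using X Y fX by (simp add: J_insert J_union)
    also have "\<dots> = J F" using Feq fa fg by (simp add: J_insert)
    also have "\<dots> = J E" using opuD(4)[OF F(1)] opuD(4)[OF E] by simp
    finally have jeq: "J ({a} \<union> X \<union> Y) = J E" .
    have "{a} \<union> X \<union> Y \<subseteq> E" using a X Y by blast
    from J_inj[OF E this subset_refl jeq] have "{a} \<union> X \<union> Y = E" .
    then have XYu: "X \<union> Y = E - {a}" using Xa Ya by blast
    then have "card X + card Y = 3" using card_Un_disjoint[OF fX XY] cEa by simp
    moreover have "card X \<noteq> 0" "card Y \<noteq> 0" using fX Xne Yne by auto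
    ultimately have "card X = 1 \<or> card Y = 1" by linarith
    then show ?thesis
    proof
      assume "card X = 1"
      then obtain x where x: "X = {x}" by (auto simp: card_1_singleton_iff)
      have "Y = E - {a, x}" using XYu XY x by blast
      then have "F = Fx x" unfolding Fx_def using Feq X Y x by simp
      moreover have "x \<in> E - {a}" using Xa x by blast
      ultimately show ?thesis unfolding R_def using F(2) by blast
    next
      assume "card Y = 1"
      then obtain y where y: "Y = {y}" by (auto simp: card_1_singleton_iff)
      have "X = E - {a, y}" using XYu XY y by blast
      then have "F = Fx y" unfolding Fx_def using Feq X Y y by (simp add: insert_commute)
      moreover have "y \<in> E - {a}" using Ya y by blast
      ultimately show ?thesis unfolding R_def using F(2) by blast
    qed
  qed
  have seteq: "{U. inB oc U \<and> dim U = 3 \<and> S2 a \<subset> U \<and> U \<subseteq> Sp E} = R ` (E - {a})"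
  proof
    show "{U. inB oc U \<and> dim U = 3 \<and> S2 a \<subset> U \<and> U \<subseteq> Sp E} \<subseteq> R ` (E - {a})"
      using inR by (rule subsetI)
    show "R ` (E - {a}) \<subseteq> {U. inB oc U \<and> dim U = 3 \<and> S2 a \<subset> U \<and> U \<subseteq> Sp E}"
      using memR by (rule image_subsetI)
  qed
  have "inj_on R (E - {a})"
  proof (rule inj_onI)
    fix x y assume x: "x \<in> E - {a}" and y: "y \<in> E - {a}" and eq: "R x = R y"
    have "Fx x = Fx y" using eq Sp_inj Fx[OF x] Fx[OF y] unfolding R_def by blast
    then have "x \<in> {a, y, J (E - {a, y})}" unfolding Fx_def by blast
    moreover have "x \<noteq> J (E - {a, y})"
    proof
      assume "x = J (E - {a, y})"
      then have "J {x} = J (E - {a, y})" by simp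
      moreover have "{x} \<subseteq> E" "E - {a, y} \<subseteq> E" using x by auto
      ultimately have "{x} = E - {a, y}" using J_inj[OF E] by metis
      then have "card (E - {a, y}) = card {x}" by (simp only:)
      then show False using cEax[OF y] by simp
    qed
    ultimately show "x = y" using x by blast
  qed
  then have "card (R ` (E - {a})) = 3" using card_image cEa by metis
  then show ?thesis using seteq by simp
qed

end


context OML begin

lemma e_not_top:
  assumes E: "opu oc E" and c: "card E \<ge> 2" and e: "e \<in> E"
  shows "e \<noteq> top"
proof
  assume et: "e = top"
  have fE: "finite E" using opuD(1)[OF E] .
  have "card (E - {e}) \<ge> 1" using c e fE by (simp add: card_Diff_singleton)
  then obtain e' where e': "e' \<in> E - {e}" by (metis card.empty ex_in_conv not_one_le_zero)
  then have "e' \<le> oc e" using opuD(3)[OF E] e by blast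
  then have "e' = bot" using et by (simp add: bot_unique)
  then show False using e' opuD(2)[OF E] by blast
qed

lemma three_split:
  assumes E: "opu oc E" and c: "card E = 3" and x: "x \<in> Sp E" "x \<noteq> bot" "x \<noteq> top"
  shows "(\<exists>e u v. E = {e, u, v} \<and> u \<noteq> v \<and> x = e \<and> oc x = sup u v) \<or>
         (\<exists>e u v. E = {e, u, v} \<and> u \<noteq> v \<and> oc x = e \<and> x = sup u v)"
proof -
  have fE: "finite E" using opuD(1)[OF E] .
  obtain X where X: "X \<subseteq> E" "x = J X" using x unfolding Sp_mem_iff by blast
  have Xne: "X \<noteq> {}" using X x by auto
  have XnE: "X \<noteq> E" using X x opuD(4)[OF E] by auto
  have fX: "finite X" using opu_fin[OF E X(1)] .
  have ocx: "oc x = J (E - X)" using L1[OF E X(1)] X by simp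
  have "card X \<noteq> 0" using fX Xne by simp
  moreover have "X \<subset> E" using X XnE by blast
  then have "card X < 3" using psubset_card_mono[OF fE] c by metis
  ultimately have "card X = 1 \<or> card X = 2" by linarith
  then show ?thesis
  proof
    assume c1: "card X = 1"
    then obtain e where e: "X = {e}" by (auto simp: card_1_singleton_iff)
    have "card (E - X) = 2" using card_Diff_subset[OF fX X(1)] c c1 by simp
    then obtain u v where uv: "E - X = {u, v}" "u \<noteq> v" using card_2_iff by metis
    have "E = {e, u, v}" using uv e X by blast
    then show ?thesis using uv e X ocx by auto
  next
    assume c2: "card X = 2"
    then obtain u v where uv: "X = {u, v}" "u \<noteq> v" using card_2_iff by metis
    have "card (E - X) = 1" using card_Diff_subset[OF fX X(1)] c c2 by simp
    then obtain e where e: "E - X = {e}" by (auto simp: card_1_singleton_iff)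
    have "E = {e, u, v}" using uv e X by blast
    then show ?thesis using uv e X ocx by auto
  qed
qed

lemma ii_count:
  assumes E: "opu oc E" and c: "card E = 3" and x: "x \<in> Sp E" "x \<noteq> bot" "x \<noteq> top"
  shows "card {U. inB oc U \<and> dim U = 2 \<and> U \<subseteq> Sp E \<and> U \<noteq> S2 x} = 2"
proof -
  have fE: "finite E" using opuD(1)[OF E] .
  have eprops: "opu oc {e, oc e} \<and> card {e, oc e} = 2" if e: "e \<in> E" for e
  proof -
    have "e \<noteq> bot" using e opuD(2)[OF E] by blast
    moreover have "e \<noteq> top" using e_not_top[OF E _ e] c by simp
    ultimately show ?thesis using S2_opu by blast
  qed
  obtain e0 where e0: "e0 \<in> E" "S2 x = S2 e0" using elt_block[OF E c x] by blast
  have sub: "{U. inB oc U \<and> dim U = 2 \<and> U \<subseteq> Sp E \<and> U \<noteq> S2 x} = S2 ` E - {S2 x}"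
  proof
    show "{U. inB oc U \<and> dim U = 2 \<and> U \<subseteq> Sp E \<and> U \<noteq> S2 x} \<subseteq> S2 ` E - {S2 x}"
    proof
      fix U assume "U \<in> {U. inB oc U \<and> dim U = 2 \<and> U \<subseteq> Sp E \<and> U \<noteq> S2 x}"
      then have U: "inB oc U" "dim U = 2" "U \<subseteq> Sp E" "U \<noteq> S2 x" by auto
      obtain f where f: "U = S2 f" "f \<noteq> bot" "f \<noteq> top" "f \<in> U" using dim2_struct[OF U(1,2)] by blast
      have "f \<in> Sp E" using f(4) U(3) by blast
      then obtain e where "e \<in> E" "S2 f = S2 e" using elt_block[OF E c] f(2,3) by blast
      then show "U \<in> S2 ` E - {S2 x}" using f(1) U(4) by blast
    qed
    show "S2 ` E - {S2 x} \<subseteq> {U. inB oc U \<and> dim U = 2 \<and> U \<subseteq> Sp E \<and> U \<noteq> S2 x}"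
    proof
      fix U assume "U \<in> S2 ` E - {S2 x}"
      then obtain e where e: "e \<in> E" "U = S2 e" "U \<noteq> S2 x" by blast
      have o: "opu oc {e, oc e}" and cc: "card {e, oc e} = 2" using eprops[OF e(1)] by auto
      have "inB oc U" unfolding e(2) S2_def using Sp_inB[OF o] .
      moreover have "dim U = 2" unfolding e(2) S2_def using dim_Sp[OF o] cc by simp
      moreover have "U \<subseteq> Sp E" using Sp_S2_sub[OF E e(1)] e(2) by simp
      ultimately show "U \<in> {U. inB oc U \<and> dim U = 2 \<and> U \<subseteq> Sp E \<and> U \<noteq> S2 x}" using e(3) by blast
    qed
  qed
  have inj: "inj_on S2 E"
  proof (rule inj_onI)
    fix e e' assume e: "e \<in> E" and e': "e' \<in> E" and eq: "S2 e = S2 e'"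
    have "{e, oc e} = {e', oc e'}" using Sp_inj eprops[OF e] eprops[OF e'] eq unfolding S2_def by blast
    then have "e' = e \<or> e' = oc e" by (metis doubleton_eq_iff insertCI)
    moreover have "e' \<noteq> oc e"
    proof
      assume h: "e' = oc e"
      have "{e} \<subseteq> E" using e by blast
      from L1[OF E this] have "oc e = J (E - {e})" by simp
      then have "J {e'} = J (E - {e})" using h by simp
      moreover have "{e'} \<subseteq> E" "E - {e} \<subseteq> E" using e' by auto
      ultimately have "{e'} = E - {e}" using J_inj[OF E] by metis
      then have "card (E - {e}) = card {e'}" by (simp only:)
      then show False using c e fE by (simp add: card_Diff_singleton)
    qed
    ultimately show "e = e'" by simp
  qed
  have "card (S2 ` E) = 3" using card_image[OF inj] c by simp
  moreover have "S2 x \<in> S2 ` E" using e0 by blast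
  ultimately have "card (S2 ` E - {S2 x}) = 2" using fE by (simp add: card_Diff_singleton)
  then show ?thesis using sub by simp
qed

lemma pair:
  assumes E: "opu oc E" and u: "u \<in> E" and v: "v \<in> E" and uv: "u \<noteq> v"
    and F: "opu oc F" and FE: "F \<subseteq> Sp E" and m: "J {u, v} \<in> Sp F"
  shows "J {u, v} \<in> F \<or> (u \<in> F \<and> v \<in> F)"
proof (cases "J {u, v} \<in> F")
  case True then show ?thesis by blast
next
  case False
  obtain H where H: "H \<subseteq> F" "J {u, v} = J H" using m unfolding Sp_mem_iff by blast
  have fH: "finite H" using opu_fin[OF F H(1)] .
  have uvE: "{u, v} \<subseteq> E" using u v by blast
  have HS: "H \<subseteq> {u, v}"
  proof
    fix h assume h: "h \<in> H"
    have "h \<in> Sp E" using h H(1) FE by blast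
    then obtain Y where Y: "Y \<subseteq> E" "h = J Y" unfolding Sp_mem_iff by blast
    have "h \<le> J H" using J_ge[OF fH h] .
    then have "J Y \<le> J {u, v}" using Y H(2) by simp
    then have Yuv: "Y \<subseteq> {u, v}" using J_le_iff2[OF E Y(1) uvE] by blast
    have "Y \<noteq> {}" using Y h H(1) opuD(2)[OF F] by auto
    moreover have "Y \<noteq> {u, v}" using Y h H(1) False by auto
    ultimately have "Y = {u} \<or> Y = {v}" using Yuv by blast
    then show "h \<in> {u, v}" using Y by auto
  qed
  have "H = {u, v}" using J_inj[OF E, of H "{u, v}"] HS uvE H(2) by auto
  then show ?thesis using H(1) by blast
qed

lemma conv_count:
  assumes E: "opu oc E" and Eeq: "E = {p1, p2, q1, q2}"
    and d: "p1 \<noteq> p2" "q1 \<noteq> q2" "p1 \<noteq> q1" "p1 \<noteq> q2" "p2 \<noteq> q1" "p2 \<noteq> q2"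
    and P: "P = J {p1, p2}" and oP: "oc P = J {q1, q2}"
  shows "{U. inB oc U \<and> dim U = 3 \<and> Sp {P, oc P} \<subset> U \<and> U \<subseteq> Sp E} \<subseteq> {Sp {p1, p2, oc P}, Sp {P, q1, q2}}"
proof
  fix U assume "U \<in> {U. inB oc U \<and> dim U = 3 \<and> Sp {P, oc P} \<subset> U \<and> U \<subseteq> Sp E}"
  then have U: "inB oc U" "dim U = 3" "Sp {P, oc P} \<subset> U" "U \<subseteq> Sp E" by auto
  define F where "F = gen_family U"
  have F: "opu oc F" "U = Sp F" "card F = 3" using dim_struct[OF U(1,2)] unfolding F_def by auto
  have fF: "finite F" using opuD(1)[OF F(1)] .
  have FE: "F \<subseteq> Sp E" using U(4) F(2) Sp_sub by blast
  have PU: "P \<in> Sp F" "oc P \<in> Sp F" using U(3) F(2) Sp_sub[of "{P, oc P}"] by auto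
  have inE: "p1 \<in> E" "p2 \<in> E" "q1 \<in> E" "q2 \<in> E" using Eeq by auto
  have pp: "P \<in> F \<or> (p1 \<in> F \<and> p2 \<in> F)" using pair[OF E inE(1,2) d(1) F(1) FE] PU P by simp
  have qq: "oc P \<in> F \<or> (q1 \<in> F \<and> q2 \<in> F)" using pair[OF E inE(3,4) d(2) F(1) FE] PU oP by simp
  have jne: "J A \<noteq> J B" if "A \<subseteq> E" "B \<subseteq> E" "A \<noteq> B" for A B using J_inj[OF E] that by blast
  have neqA: "J {p1, p2} \<noteq> p1" "J {p1, p2} \<noteq> p2" "J {p1, p2} \<noteq> q1" "J {p1, p2} \<noteq> q2"
    "J {q1, q2} \<noteq> p1" "J {q1, q2} \<noteq> p2" "J {q1, q2} \<noteq> q1" "J {q1, q2} \<noteq> q2"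
    "J {p1, p2} \<noteq> J {q1, q2}"
    using jne[of "{p1, p2}" "{p1}"] jne[of "{p1, p2}" "{p2}"] jne[of "{p1, p2}" "{q1}"]
      jne[of "{p1, p2}" "{q2}"] jne[of "{q1, q2}" "{p1}"] jne[of "{q1, q2}" "{p2}"]
      jne[of "{q1, q2}" "{q1}"] jne[of "{q1, q2}" "{q2}"] jne[of "{p1, p2}" "{q1, q2}"] inE d
    by (auto simp del: J_two simp: doubleton_eq_iff)
  have neq: "P \<noteq> p1" "P \<noteq> p2" "P \<noteq> q1" "P \<noteq> q2" "oc P \<noteq> p1" "oc P \<noteq> p2" "oc P \<noteq> q1" "oc P \<noteq> q2" "P \<noteq> oc P"
    using neqA unfolding P[symmetric] oP[symmetric] by auto
  have le: "p1 \<le> P" "p2 \<le> P" "q1 \<le> oc P" "q2 \<le> oc P" using P oP by auto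
  have ord: "\<And>x y. x \<in> F \<Longrightarrow> y \<in> F \<Longrightarrow> y \<le> x \<Longrightarrow> x = y" using opu_orth[OF F(1)] by blast
  show "U \<in> {Sp {p1, p2, oc P}, Sp {P, q1, q2}}"
  proof (cases "P \<in> F")
    case True
    have "oc P \<notin> F"
    proof
      assume oPF: "oc P \<in> F"
      have "card (F - {P, oc P}) = 1" using F(3) True oPF neq(9) fF
        by (simp add: card_Diff_subset)
      then obtain g where g: "g \<in> F - {P, oc P}" by (metis card.empty ex_in_conv zero_neq_one)
      have "g \<le> oc P" using opuD(3)[OF F(1)] g True by blast
      moreover have "g \<le> oc (oc P)" using opuD(3)[OF F(1)] g oPF by blast
      ultimately have "g = bot" using zero_lemma by simp
      then show False using g opuD(2)[OF F(1)] by blast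
    qed
    then have "q1 \<in> F" "q2 \<in> F" using qq by auto
    then have s: "{P, q1, q2} \<subseteq> F" using True by blast
    have "card {P, q1, q2} = 3" using neq d by simp
    then have "{P, q1, q2} = F" using card_subset_eq[OF fF s] F(3) by simp
    then show ?thesis using F(2) by blast
  next
    case False
    then have p: "p1 \<in> F" "p2 \<in> F" using pp by auto
    show ?thesis
    proof (cases "oc P \<in> F")
      case True
      then have s: "{p1, p2, oc P} \<subseteq> F" using p by blast
      have "card {p1, p2, oc P} = 3" using neq d by auto
      then have "{p1, p2, oc P} = F" using card_subset_eq[OF fF s] F(3) by simp
      then show ?thesis using F(2) by blast
    next
      case False
      then have "q1 \<in> F" "q2 \<in> F" using qq by auto
      then have s: "{p1, p2, q1, q2} \<subseteq> F" using p by blast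
      have "card {p1, p2, q1, q2} = 4" using d by simp
      then have "4 \<le> card F" using card_mono[OF fF s] by simp
      then show ?thesis using F(3) by simp
    qed
  qed
qed

end


context OML begin

lemma construct_W:
  assumes F0: "opu oc {P, oc P}" and ne: "P \<noteq> oc P" and nP: "\<not> atom P" and nQ: "\<not> atom (oc P)"
  shows "\<exists>W. inB oc W \<and> dim W = 4 \<and> Sp {P, oc P} \<subseteq> W \<and>
           card {U. inB oc U \<and> dim U = 3 \<and> Sp {P, oc P} \<subset> U \<and> U \<subseteq> W} \<noteq> 3"
proof -
  have r0: "{P, oc P} - {P} = {oc P}" using ne by blast
  obtain p1 p2 where s1: "opu oc (insert p1 (insert p2 ({P, oc P} - {P})))"
    "card (insert p1 (insert p2 ({P, oc P} - {P}))) = Suc (card {P, oc P})"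
    "Sp {P, oc P} \<subset> Sp (insert p1 (insert p2 ({P, oc P} - {P})))"
    "P = sup p1 p2" "p1 \<noteq> p2" "p1 \<notin> {P, oc P}" "p2 \<notin> {P, oc P}"
    using split[OF F0 _ nP] by blast
  define F1 where "F1 = {p1, p2, oc P}"
  have F1: "opu oc F1" "card F1 = 3" "Sp {P, oc P} \<subset> Sp F1"
    using s1(1,2,3) ne unfolding F1_def r0 by auto
  have oF1: "oc P \<in> F1" unfolding F1_def by blast
  have r1: "F1 - {oc P} = {p1, p2}" using s1(6,7) unfolding F1_def by blast
  obtain q1 q2 where s2: "opu oc (insert q1 (insert q2 (F1 - {oc P})))"
    "card (insert q1 (insert q2 (F1 - {oc P}))) = Suc (card F1)"
    "Sp F1 \<subset> Sp (insert q1 (insert q2 (F1 - {oc P})))"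
    "oc P = sup q1 q2" "q1 \<noteq> q2" "q1 \<notin> F1" "q2 \<notin> F1"
    using split[OF F1(1) oF1 nQ] by blast
  define E where "E = {p1, p2, q1, q2}"
  have Eeq: "insert q1 (insert q2 (F1 - {oc P})) = E" unfolding E_def r1 by auto
  have E: "opu oc E" "card E = 4" "Sp F1 \<subset> Sp E" using s2(1,2,3) F1(2) unfolding Eeq by auto
  have d: "p1 \<noteq> p2" "q1 \<noteq> q2" "p1 \<noteq> q1" "p1 \<noteq> q2" "p2 \<noteq> q1" "p2 \<noteq> q2"
    using s1(5) s2(5,6,7) unfolding F1_def by auto
  have P: "P = J {p1, p2}" and oP: "oc P = J {q1, q2}" using s1(4) s2(4) by simp_all
  have sub: "{U. inB oc U \<and> dim U = 3 \<and> Sp {P, oc P} \<subset> U \<and> U \<subseteq> Sp E} \<subseteq> {Sp {p1, p2, oc P}, Sp {P, q1, q2}}"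
    using conv_count[OF E(1) E_def d P oP] .
  have "card {Sp {p1, p2, oc P}, Sp {P, q1, q2}} \<le> 2" by (simp add: card_insert_le_m1)
  then have "card {U. inB oc U \<and> dim U = 3 \<and> Sp {P, oc P} \<subset> U \<and> U \<subseteq> Sp E} \<le> 2"
    using card_mono[OF _ sub] by (meson finite.emptyI finite.insertI order_trans)
  moreover have "inB oc (Sp E)" using Sp_inB[OF E(1)] .
  moreover have "dim (Sp E) = 4" using dim_Sp[OF E(1)] E(2) by simp
  moreover have "Sp {P, oc P} \<subseteq> Sp E" using F1(3) E(3) by blast
  ultimately show ?thesis by (intro exI[of _ "Sp E"]) auto
qed

lemma main:
  assumes VB: "inB oc V"
    and Vdim: "dim V = 2"
    and FV: "gen_family V = {P, oc P}"
  shows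
    "(maximalB oc V \<longrightarrow> atom P \<and> atom (oc P))
   \<and> (\<forall>W. inB oc W \<and> dim W = 3 \<and> maximalB oc W \<and> V \<subseteq> W \<longrightarrow>
        ((atom P \<and> (\<exists>a b. atom a \<and> atom b \<and> a \<noteq> b \<and> oc P = sup a b)) \<or>
         (atom (oc P) \<and> (\<exists>a b. atom a \<and> atom b \<and> a \<noteq> b \<and> P = sup a b))) \<and>
        card {U. inB oc U \<and> dim U = 2 \<and> U \<subseteq> W \<and> U \<noteq> V} = 2)
   \<and> (\<not> maximalB oc V \<and>
      \<not> (\<exists>W. inB oc W \<and> dim W = 3 \<and> maximalB oc W \<and> V \<subseteq> W) \<longrightarrow>
        ((atom P \<or> atom (oc P)) \<longleftrightarrow>
         (\<forall>W. inB oc W \<and> dim W = 4 \<and> V \<subseteq> W \<longrightarrow>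
            card {U. inB oc U \<and> dim U = 3 \<and> V \<subset> U \<and> U \<subseteq> W} = 3)))"
proof -
  have F0: "opu oc {P, oc P}" "V = Sp {P, oc P}" "card {P, oc P} = 2"
    using dim_struct[OF VB Vdim] FV by auto
  have ne: "P \<noteq> oc P" using F0(3) by auto
  have Pnb: "P \<noteq> bot" "oc P \<noteq> bot" using opuD(2)[OF F0(1)] by auto
  have Pnt: "P \<noteq> top" using Pnb(2) by auto
  have VS2: "V = S2 P" unfolding S2_def using F0(2) .
  have PV: "P \<in> V" using F0(2) Sp_sub by blast
  have i: "maximalB oc V \<longrightarrow> atom P \<and> atom (oc P)"
    using maximal_atom[OF F0(1)] F0(2) by auto
  have ii: "\<forall>W. inB oc W \<and> dim W = 3 \<and> maximalB oc W \<and> V \<subseteq> W \<longrightarrow>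
        ((atom P \<and> (\<exists>a b. atom a \<and> atom b \<and> a \<noteq> b \<and> oc P = sup a b)) \<or>
         (atom (oc P) \<and> (\<exists>a b. atom a \<and> atom b \<and> a \<noteq> b \<and> P = sup a b))) \<and>
        card {U. inB oc U \<and> dim U = 2 \<and> U \<subseteq> W \<and> U \<noteq> V} = 2"
  proof (intro allI impI)
    fix W assume W: "inB oc W \<and> dim W = 3 \<and> maximalB oc W \<and> V \<subseteq> W"
    define E where "E = gen_family W"
    have E: "opu oc E" "W = Sp E" "card E = 3" using dim_struct[of W 3] W unfolding E_def by auto
    have atE: "\<And>e. e \<in> E \<Longrightarrow> atom e" using maximal_atom[OF E(1)] W E(2) by auto
    have PW: "P \<in> Sp E" using PV W E(2) by blast
    have A: "(atom P \<and> (\<exists>a b. atom a \<and> atom b \<and> a \<noteq> b \<and> oc P = sup a b)) \<or>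
         (atom (oc P) \<and> (\<exists>a b. atom a \<and> atom b \<and> a \<noteq> b \<and> P = sup a b))"
      using three_split[OF E(1) E(3) PW Pnb(1) Pnt]
    proof
      assume "\<exists>e u v. E = {e, u, v} \<and> u \<noteq> v \<and> P = e \<and> oc P = sup u v"
      then obtain e u v where euv: "E = {e, u, v}" "u \<noteq> v" "P = e" "oc P = sup u v" by blast
      have "atom P" "atom u" "atom v" using atE euv by auto
      then show ?thesis using euv(2,4) by blast
    next
      assume "\<exists>e u v. E = {e, u, v} \<and> u \<noteq> v \<and> oc P = e \<and> P = sup u v"
      then obtain e u v where euv: "E = {e, u, v}" "u \<noteq> v" "oc P = e" "P = sup u v" by blast
      have "atom (oc P)" "atom u" "atom v" using atE euv by auto
      then show ?thesis using euv(2,4) by blast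
    qed
    have "card {U. inB oc U \<and> dim U = 2 \<and> U \<subseteq> Sp E \<and> U \<noteq> S2 P} = 2"
      using ii_count[OF E(1) E(3) PW Pnb(1) Pnt] .
    then have "card {U. inB oc U \<and> dim U = 2 \<and> U \<subseteq> W \<and> U \<noteq> V} = 2" using E(2) VS2 by simp
    then show "((atom P \<and> (\<exists>a b. atom a \<and> atom b \<and> a \<noteq> b \<and> oc P = sup a b)) \<or>
         (atom (oc P) \<and> (\<exists>a b. atom a \<and> atom b \<and> a \<noteq> b \<and> P = sup a b))) \<and>
        card {U. inB oc U \<and> dim U = 2 \<and> U \<subseteq> W \<and> U \<noteq> V} = 2" using A by blast
  qed
  have fwd: "\<forall>W. inB oc W \<and> dim W = 4 \<and> V \<subseteq> W \<longrightarrow>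
            card {U. inB oc U \<and> dim U = 3 \<and> V \<subset> U \<and> U \<subseteq> W} = 3"
    if at: "atom P \<or> atom (oc P)"
  proof (intro allI impI)
    fix W assume W: "inB oc W \<and> dim W = 4 \<and> V \<subseteq> W"
    define E where "E = gen_family W"
    have E: "opu oc E" "W = Sp E" "card E = 4" using dim_struct[of W 4] W unfolding E_def by auto
    obtain x where x: "atom x" "x \<in> V" "V = S2 x"
      using at VS2 S2_oc F0(2) Sp_sub[of "{P, oc P}"] by blast
    have "x \<in> E" using atom_in[OF E(1)] x W E(2) by blast
    from iii_fwd[OF E(1) E(3) this]
    show "card {U. inB oc U \<and> dim U = 3 \<and> V \<subset> U \<and> U \<subseteq> W} = 3" using E(2) x(3) by simp
  qed
  have bwd: "atom P \<or> atom (oc P)"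
    if h: "\<forall>W. inB oc W \<and> dim W = 4 \<and> V \<subseteq> W \<longrightarrow>
            card {U. inB oc U \<and> dim U = 3 \<and> V \<subset> U \<and> U \<subseteq> W} = 3"
  proof (rule ccontr)
    assume "\<not> (atom P \<or> atom (oc P))"
    then obtain W where "inB oc W" "dim W = 4" "V \<subseteq> W"
      "card {U. inB oc U \<and> dim U = 3 \<and> V \<subset> U \<and> U \<subseteq> W} \<noteq> 3"
      using construct_W[OF F0(1) ne] F0(2) by auto
    then show False using h by blast
  qed
  show ?thesis using i ii fwd bwd by blast
qed

end

theorem lemma3p2:
  fixes oc :: "'a::bounded_lattice \<Rightarrow> 'a" and V :: "'a set" and P :: 'a
  assumes oml: "orthomodular oc"
    and atm: "atomic TYPE('a)"
    and VB: "inB oc V"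
    and Vdim: "dim V = 2"
    and FV: "gen_family V = {P, oc P}"
  shows
    "(maximalB oc V \<longrightarrow> atom P \<and> atom (oc P))
   \<and> (\<forall>W. inB oc W \<and> dim W = 3 \<and> maximalB oc W \<and> V \<subseteq> W \<longrightarrow>
        ((atom P \<and> (\<exists>a b. atom a \<and> atom b \<and> a \<noteq> b \<and> oc P = sup a b)) \<or>
         (atom (oc P) \<and> (\<exists>a b. atom a \<and> atom b \<and> a \<noteq> b \<and> P = sup a b))) \<and>
        card {U. inB oc U \<and> dim U = 2 \<and> U \<subseteq> W \<and> U \<noteq> V} = 2)
   \<and> (\<not> maximalB oc V \<and>
      \<not> (\<exists>W. inB oc W \<and> dim W = 3 \<and> maximalB oc W \<and> V \<subseteq> W) \<longrightarrow>
        ((atom P \<or> atom (oc P)) \<longleftrightarrow>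
         (\<forall>W. inB oc W \<and> dim W = 4 \<and> V \<subseteq> W \<longrightarrow>
            card {U. inB oc U \<and> dim U = 3 \<and> V \<subset> U \<and> U \<subseteq> W} = 3)))"
proof -
  interpret OML oc using oml by unfold_locales
  show ?thesis using main[OF VB Vdim FV] .
qed

end
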